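(* Let $n$ be a positive integer, $q=2^n$, and let $k$ be an integer with $1\le k\le n-1$ and $k\notin\{n/3,2n/3\}$. Put $d=\gcd(n,k)$, $q_0=2^d$, $s=n/d$, and assume $s$ is odd. For $\alpha,\beta\in\mathbb{F}_q$ with $(\alpha,\beta)\neq(0,0)$, consider the $\mathbb{F}_{q_0}$-valued quadratic form $$f_{\alpha,\beta}(x)=\mathrm{Tr}_d^n\!\left(\alpha x^{2^{2k}+1}+\beta x^{2^k+1}\right)$$ on the $s$-dimensional $\mathbb{F}_{q_0}$-vector space $\mathbb{F}_q$, and let $r_{\alpha,\beta}$ be the rank over $\mathbb{F}_{q_0}$ of its associated (alternating) bilinear form $B_{\alpha,\beta}(x,y)=f_{\alpha,\beta}(x+y)-f_{\alpha,\beta}(x)-f_{\alpha,\beta}(y)$. Then $r_{\alpha,\beta}\in\{s-1,\,s-3\}$.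
   Context: $\mathrm{Tr}_d^n:\mathbb{F}_{2^n}\to\mathbb{F}_{2^d}$ denotes the relative trace map $x\mapsto \sum_{i=0}^{s-1}x^{2^{di}}$. Equivalently, after fixing an $\mathbb{F}_{q_0}$-basis of $\mathbb{F}_q$, $f_{\alpha,\beta}$ becomes $F(X)=XHX^T$ for an $s\times s$ matrix $H$ over $\mathbb{F}_{q_0}$ and $r_{\alpha,\beta}$ is the rank of $H+H^T$. *)

theory Defs
  imports Main
begin

definition rel_trace :: "nat \<Rightarrow> nat \<Rightarrow> 'a::field \<Rightarrow> 'a" where
  "rel_trace d n x = (\<Sum>i<n div d. x ^ (2 ^ (d * i)))"

definition f_ab :: "nat \<Rightarrow> nat \<Rightarrow> nat \<Rightarrow> 'a::field \<Rightarrow> 'a \<Rightarrow> 'a \<Rightarrow> 'a" where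
  "f_ab d n k \<alpha> \<beta> x =
     rel_trace d n (\<alpha> * x ^ (2 ^ (2 * k) + 1) + \<beta> * x ^ (2 ^ k + 1))"

definition assoc_bilinear :: "('a::field \<Rightarrow> 'a) \<Rightarrow> 'a \<Rightarrow> 'a \<Rightarrow> 'a" where
  "assoc_bilinear f x y = f (x + y) - f x - f y"

definition radical :: "('a \<Rightarrow> 'a \<Rightarrow> 'a::field) \<Rightarrow> 'a set" where
  "radical B = {x. \<forall>y. B x y = 0}"

text \<open>Rank over F_{q0} of a bilinear form on an s-dimensional F_{q0}-space:
  s minus the F_{q0}-dimension of its radical; the radical, an F_{q0}-subspace,
  has q0^m elements where m is its dimension.\<close>
definition form_rank :: "nat \<Rightarrow> nat \<Rightarrow> ('a \<Rightarrow> 'a \<Rightarrow> 'a::field) \<Rightarrow> nat" where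
  "form_rank q0 s B = s - (THE m. card (radical B) = q0 ^ m)"

end

theory Submission
  imports Defs "HOL-Computational_Algebra.Polynomial" "HOL-Computational_Algebra.Primes"
    "HOL-Number_Theory.Residues"
begin

lemma char2_of_card:
  assumes "card (UNIV :: 'a::{field,finite} set) = 2 ^ n" "n > 0"
  shows "(2::'a) = 0"
proof -
  have pos: "CHAR('a) > 0" by (rule finite_imp_CHAR_pos) simp
  have pr: "prime CHAR('a)" using prime_CHAR_semidom[OF pos] .
  have "CHAR('a) dvd 2 ^ n" using CHAR_dvd_CARD[where 'a='a] assms(1) by simp
  hence "CHAR('a) dvd 2" using pr prime_dvd_power by blast
  hence "CHAR('a) = 2" using pr by (metis dvd_imp_le prime_ge_2_nat le_antisym zero_less_numeral)
  thus ?thesis using of_nat_CHAR[where 'a='a] by simp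
qed

lemma pow_card_same:
  fixes x :: "'a::{field,finite}"
  shows "x ^ card (UNIV :: 'a set) = x"
proof (cases "x = 0")
  case False
  have "x * (\<Prod>y\<in>UNIV-{0}. x * y) = x * x ^ (card (UNIV :: 'a set) - 1) * \<Prod>(UNIV-{0})"
    by (simp add: prod.distrib mult_ac)
  also have "x * x ^ (card (UNIV :: 'a set) - 1) = x ^ Suc (card (UNIV :: 'a set) - 1)"
    by (subst power_Suc) auto
  also have "Suc (card (UNIV :: 'a set) - 1) = card (UNIV :: 'a set)"
    using finite_UNIV_card_ge_0[where ?'a = 'a] by simp
  also have "(\<Prod>y\<in>UNIV-{0}. x * y) = (\<Prod>y\<in>UNIV-{0}. y)"
    by (rule prod.reindex_bij_witness[of _ "\<lambda>y. y / x" "\<lambda>y. x * y"]) (use False in auto)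
  finally show ?thesis
    by simp
qed (use finite_UNIV_card_ge_0[where ?'a = 'a] in auto)

lemma frob_add:
  fixes x y :: "'a::field"
  assumes two: "(2::'a) = 0"
  shows "(x + y) ^ (2 ^ j) = x ^ (2 ^ j) + y ^ (2 ^ j)"
proof (induction j)
  case 0 then show ?case by simp
next
  case (Suc j)
  have "(x + y) ^ (2 ^ Suc j) = ((x + y) ^ (2 ^ j)) ^ 2"
    by (simp add: power_mult[symmetric] mult.commute)
  also have "\<dots> = (x ^ (2 ^ j) + y ^ (2 ^ j)) ^ 2" using Suc by simp
  also have "\<dots> = (x ^ (2 ^ j)) ^ 2 + (y ^ (2 ^ j)) ^ 2 + 2 * (x ^ (2 ^ j)) * (y ^ (2 ^ j))"
    by (simp add: power2_eq_square algebra_simps)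
  also have "\<dots> = (x ^ (2 ^ j)) ^ 2 + (y ^ (2 ^ j)) ^ 2" using two by simp
  finally show ?case by (simp add: power_mult[symmetric] mult.commute)
qed

lemma minus_eq_plus_c2:
  fixes x y :: "'a::field"
  assumes two: "(2::'a) = 0"
  shows "x - y = x + y"
proof -
  have "y + y = 2 * y" by simp
  hence "y + y = 0" using two by simp
  hence "- y = y" by (simp add: neg_eq_iff_add_eq_0)
  thus ?thesis by (metis diff_conv_add_uminus)
qed

lemma frob_sum:
  fixes f :: "'b \<Rightarrow> 'a::field"
  assumes two: "(2::'a) = 0"
  shows "(sum f A) ^ (2 ^ j) = (\<Sum>i\<in>A. (f i) ^ (2 ^ j))"
proof (induction A rule: infinite_finite_induct)
  case (infinite A) then show ?case by simp
next
  case empty then show ?case by simp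
next
  case (insert x F) then show ?case by (simp add: frob_add[OF two])
qed

lemma pow2_compose:
  fixes x :: "'a::comm_monoid_mult"
  shows "(x ^ (2 ^ a)) ^ (2 ^ b) = x ^ (2 ^ (a + b))"
  by (simp add: power_mult[symmetric] power_add)

lemma pow2_iter_fixed:
  fixes x :: "'a::comm_monoid_mult"
  assumes "x ^ (2 ^ a) = x"
  shows "x ^ (2 ^ (a * i)) = x"
proof (induction i)
  case 0 then show ?case by simp
next
  case (Suc i)
  have "x ^ (2 ^ (a * Suc i)) = (x ^ (2 ^ (a * i))) ^ (2 ^ a)"
    by (simp add: pow2_compose add.commute)
  then show ?case using Suc assms by simp
qed

lemma fiber_card:
  fixes D :: "'a::{ab_group_add,finite} \<Rightarrow> 'b::{ab_group_add,finite}"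
  assumes add: "\<And>x y. D (x + y) = D x + D y"
  shows "card (D -` S) \<le> card {x. D x = 0} * card S"
proof -
  have D0: "D 0 = 0" using add[of 0 0] by simp
  have Dm: "D (x - y) = D x - D y" for x y
    using add[of "x - y" y] by (simp add: algebra_simps)
  have fib: "card {x. D x = y} \<le> card {x. D x = 0}" for y
  proof (cases "\<exists>x0. D x0 = y")
    case True
    then obtain x0 where x0: "D x0 = y" by blast
    have "inj_on (\<lambda>x. x - x0) {x. D x = y}" by (auto intro: inj_onI)
    moreover have "(\<lambda>x. x - x0) ` {x. D x = y} \<subseteq> {x. D x = 0}" using x0 Dm by auto
    ultimately show ?thesis by (meson card_inj_on_le finite)
  next
    case False then show ?thesis by simp
  qed
  have "D -` S = (\<Union>y\<in>S. {x. D x = y})" by auto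
  hence "card (D -` S) = card (\<Union>y\<in>S. {x. D x = y})" by simp
  also have "\<dots> \<le> (\<Sum>y\<in>S. card {x. D x = y})"
    by (rule card_UN_le) simp
  also have "\<dots> \<le> (\<Sum>y\<in>S. card {x. D x = 0})" by (intro sum_mono fib)
  also have "\<dots> = card S * card {x. D x = 0}" by simp
  finally show ?thesis by (simp add: mult.commute)
qed


lemma sympl:
  fixes B :: "'a::{field,finite} \<Rightarrow> 'a \<Rightarrow> 'a" and K :: "'a set"
  assumes two: "(2::'a) = 0"
    and Kmul: "\<And>a b. a \<in> K \<Longrightarrow> b \<in> K \<Longrightarrow> a * b \<in> K"
    and Kinv: "\<And>a. a \<in> K \<Longrightarrow> inverse a \<in> K"
    and Bval: "\<And>x y. B x y \<in> K"
    and Badd: "\<And>x y z. B (x + y) z = B x z + B y z"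
    and Bsym: "\<And>x y. B x y = B y x"
    and Bscal: "\<And>a x y. a \<in> K \<Longrightarrow> B (a * x) y = a * B x y"
    and Balt: "\<And>x. B x x = 0"
  shows "0 \<in> V \<Longrightarrow> (\<forall>x\<in>V. \<forall>y\<in>V. x + y \<in> V) \<Longrightarrow> (\<forall>a\<in>K. \<forall>x\<in>V. a * x \<in> V) \<Longrightarrow>
    \<exists>j. card V = card {v\<in>V. \<forall>u\<in>V. B v u = 0} * card K ^ (2 * j)"
proof (induction "card V" arbitrary: V rule: less_induct)
  case (less V)
  have Badd2: "B z (x + y) = B z x + B z y" for x y z using Badd Bsym by metis
  have Bscal2: "a \<in> K \<Longrightarrow> B z (a * x) = a * B z x" for a x z using Bscal Bsym by metis
  have B0: "B 0 z = 0" for z using Badd[of 0 0 z] by (metis add.right_neutral add_left_cancel)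
  have B02: "B z 0 = 0" for z using B0 Bsym by metis
  have pp: "u + u = 0" for u :: 'a using two by (metis mult_2 mult_zero_left)
  have pp2: "u + (u + v) = v" for u v :: 'a using pp by (metis add.assoc add_0)
  show ?case
  proof (cases "\<forall>v\<in>V. \<forall>u\<in>V. B v u = 0")
    case True
    then have "{v\<in>V. \<forall>u\<in>V. B v u = 0} = V" by blast
    then show ?thesis by (intro exI[of _ 0]) simp
  next
    case False
    then obtain x u where xV: "x \<in> V" and uV: "u \<in> V" and xu: "B x u \<noteq> 0" by blast
    define y where "y = inverse (B x u) * u"
    have yV: "y \<in> V" unfolding y_def using less.prems Kinv Bval uV by blast
    have xy: "B x y = 1" unfolding y_def using Bscal2 Kinv Bval xu by simp
    have yx: "B y x = 1" using xy Bsym by metis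
    define W where "W = {v\<in>V. B x v = 0 \<and> B y v = 0}"
    have W0: "0 \<in> W" unfolding W_def using less.prems B02 by simp
    have Wadd: "\<forall>a\<in>W. \<forall>b\<in>W. a + b \<in> W" unfolding W_def using less.prems Badd2 by auto
    have Wsc: "\<forall>a\<in>K. \<forall>b\<in>W. a * b \<in> W" unfolding W_def using less.prems Bscal2 by auto
    have WV: "W \<subseteq> V" unfolding W_def by auto
    have "x \<notin> W" unfolding W_def using yx by auto
    hence "W \<subset> V" using WV xV by blast
    hence "card W < card V" by (simp add: psubset_card_mono)
    then obtain j where j: "card W = card {v\<in>W. \<forall>u\<in>W. B v u = 0} * card K ^ (2 * j)"
      using less.hyps W0 Wadd Wsc by blast
    have dec: "u' + B y u' * x + B x u' * y \<in> W" if "u' \<in> V" for u'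
    proof -
      have "u' + B y u' * x + B x u' * y \<in> V" using that xV yV less.prems Bval by simp
      moreover have "B x (u' + B y u' * x + B x u' * y) = 0"
        using Badd2 Bscal2 Bval Balt xy pp by simp
      moreover have "B y (u' + B y u' * x + B x u' * y) = 0"
        using Badd2 Bscal2 Bval Balt yx pp by (simp add: add.assoc)
      ultimately show ?thesis unfolding W_def by blast
    qed
    have rad: "{v\<in>W. \<forall>u\<in>W. B v u = 0} = {v\<in>V. \<forall>u\<in>V. B v u = 0}"
    proof (intro equalityI subsetI)
      fix v assume "v \<in> {v\<in>W. \<forall>u\<in>W. B v u = 0}"
      hence vW: "v \<in> W" and vr: "\<forall>u\<in>W. B v u = 0" by auto
      have "B v u' = 0" if "u' \<in> V" for u'
      proof -
        define w where "w = u' + B y u' * x + B x u' * y"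
        have wW: "w \<in> W" unfolding w_def using dec that by blast
        have "u' = w + B y u' * x + B x u' * y" unfolding w_def
          by (simp add: add_ac pp pp2)
        hence "B v u' = B v (w + B y u' * x + B x u' * y)" by (rule arg_cong)
        also have "\<dots> = B v w + B y u' * B v x + B x u' * B v y"
          using Badd2 Bscal2 Bval by simp
        finally have "B v u' = B v w + B y u' * B v x + B x u' * B v y" .
        moreover have "B v x = 0" "B v y = 0" using vW unfolding W_def using Bsym by auto
        ultimately show ?thesis using vr wW by simp
      qed
      thus "v \<in> {v\<in>V. \<forall>u\<in>V. B v u = 0}" using vW WV by auto
    next
      fix v assume "v \<in> {v\<in>V. \<forall>u\<in>V. B v u = 0}"
      thus "v \<in> {v\<in>W. \<forall>u\<in>W. B v u = 0}" unfolding W_def using xV yV Bsym by auto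
    qed
    have bij: "bij_betw (\<lambda>(w, a, b). w + a * x + b * y) (W \<times> K \<times> K) V"
    proof (rule bij_betw_imageI)
      show "inj_on (\<lambda>(w, a, b). w + a * x + b * y) (W \<times> K \<times> K)"
      proof (rule inj_onI)
        fix p1 p2 assume p1: "p1 \<in> W \<times> K \<times> K" and p2: "p2 \<in> W \<times> K \<times> K"
          and eq0: "(\<lambda>(w, a, b). w + a * x + b * y) p1 = (\<lambda>(w, a, b). w + a * x + b * y) p2"
        obtain w1 a1 b1 where P1: "p1 = (w1, a1, b1)" by (cases p1) auto
        obtain w2 a2 b2 where P2: "p2 = (w2, a2, b2)" by (cases p2) auto
        have w1: "w1 \<in> W" and w2: "w2 \<in> W" and a: "a1 \<in> K" "a2 \<in> K" "b1 \<in> K" "b2 \<in> K"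
          using p1 p2 P1 P2 by auto
        have eq: "w1 + a1 * x + b1 * y = w2 + a2 * x + b2 * y" using eq0 P1 P2 by simp
        have "B x (w1 + a1 * x + b1 * y) = B x (w2 + a2 * x + b2 * y)" using eq by simp
        hence b: "b1 = b2" using w1 w2 a Badd2 Bscal2 Balt xy unfolding W_def by simp
        have "B y (w1 + a1 * x + b1 * y) = B y (w2 + a2 * x + b2 * y)" using eq by simp
        hence a': "a1 = a2" using w1 w2 a Badd2 Bscal2 Balt yx unfolding W_def by simp
        show "p1 = p2" using eq a' b P1 P2 by simp
      qed
    next
      show "(\<lambda>(w, a, b). w + a * x + b * y) ` (W \<times> K \<times> K) = V"
      proof (intro equalityI subsetI)
        fix v assume "v \<in> (\<lambda>(w, a, b). w + a * x + b * y) ` (W \<times> K \<times> K)"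
        then obtain w a b where "w \<in> W" "a \<in> K" "b \<in> K" "v = w + a * x + b * y" by auto
        thus "v \<in> V" using WV less.prems xV yV by blast
      next
        fix v assume vV: "v \<in> V"
        have "v = (v + B y v * x + B x v * y) + B y v * x + B x v * y"
          by (simp add: add_ac pp pp2)
        moreover have "(v + B y v * x + B x v * y, B y v, B x v) \<in> W \<times> K \<times> K"
          using dec vV Bval by simp
        ultimately show "v \<in> (\<lambda>(w, a, b). w + a * x + b * y) ` (W \<times> K \<times> K)"
          by (metis (no_types, lifting) case_prod_conv image_eqI)
      qed
    qed
    have "card V = card W * (card K * card K)"
      using bij_betw_same_card[OF bij] by (simp add: card_cartesian_product)
    also have "\<dots> = card {v\<in>V. \<forall>u\<in>V. B v u = 0} * card K ^ (2 * Suc j)"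
      using j rad by (simp add: power_add power2_eq_square mult_ac)
    finally show ?thesis by blast
  qed
qed


fun sev :: "('a::field \<Rightarrow> 'a) \<Rightarrow> 'a list \<Rightarrow> 'a \<Rightarrow> 'a" where
  "sev \<sigma> [] x = 0"
| "sev \<sigma> (a # as) x = a * x + sev \<sigma> as (\<sigma> x)"

lemma sev_add:
  assumes sadd: "\<And>x y. \<sigma> (x + y) = \<sigma> x + \<sigma> y"
  shows "sev \<sigma> as (x + y) = sev \<sigma> as x + sev \<sigma> as y"
  by (induction as arbitrary: x y) (simp_all add: sadd algebra_simps)

lemma sev_zero:
  assumes sadd: "\<And>x y. \<sigma> (x + y) = \<sigma> x + \<sigma> y"
  shows "sev \<sigma> as 0 = 0"
  using sev_add[OF sadd, of as 0 0] by (metis add.right_neutral add_left_cancel)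

lemma sev_div:
  fixes \<sigma> :: "'a::field \<Rightarrow> 'a"
  assumes sadd: "\<And>x y. \<sigma> (x + y) = \<sigma> x + \<sigma> y"
    and smul: "\<And>x y. \<sigma> (x * y) = \<sigma> x * \<sigma> y"
  shows "\<exists>b r. length b = length a - 1 \<and> (\<forall>x. sev \<sigma> a x = sev \<sigma> b (\<sigma> x - c * x) + r * x)"
proof (induction a arbitrary: c)
  case Nil
  then show ?case by (intro exI[of _ "[]"] exI[of _ 0]) simp
next
  case (Cons a0 as)
  show ?case
  proof (cases "as = []")
    case True
    then show ?thesis by (intro exI[of _ "[]"] exI[of _ a0]) simp
  next
    case False
    obtain b' r' where len: "length b' = length as - 1"
      and e: "\<And>y. sev \<sigma> as y = sev \<sigma> b' (\<sigma> y - \<sigma> c * y) + r' * y"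
      using Cons.IH[of "\<sigma> c"] by blast
    have sm: "\<sigma> (u - v) = \<sigma> u - \<sigma> v" for u v
      using sadd[of "u - v" v] by (simp add: algebra_simps)
    have "sev \<sigma> (a0 # as) x = sev \<sigma> (r' # b') (\<sigma> x - c * x) + (a0 + r' * c) * x" for x
    proof -
      have "sev \<sigma> (a0 # as) x = a0 * x + sev \<sigma> b' (\<sigma> (\<sigma> x) - \<sigma> c * \<sigma> x) + r' * \<sigma> x"
        using e[of "\<sigma> x"] by simp
      moreover have eq: "\<sigma> (\<sigma> x - c * x) = \<sigma> (\<sigma> x) - \<sigma> c * \<sigma> x" using sm smul by simp
      moreover have "sev \<sigma> (r' # b') (\<sigma> x - c * x) = r' * (\<sigma> x - c * x) + sev \<sigma> b' (\<sigma> (\<sigma> x) - \<sigma> c * \<sigma> x)"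
        by (simp only: sev.simps eq)
      ultimately show ?thesis by (simp add: algebra_simps)
    qed
    moreover have "length (r' # b') = length (a0 # as) - 1" using len False by simp
    ultimately show ?thesis by blast
  qed
qed

lemma sev_kernel:
  fixes \<sigma> :: "'a::{field,finite} \<Rightarrow> 'a"
  assumes sadd: "\<And>x y. \<sigma> (x + y) = \<sigma> x + \<sigma> y"
    and smul: "\<And>x y. \<sigma> (x * y) = \<sigma> x * \<sigma> y"
    and s1: "\<sigma> 1 = 1"
    and s0: "\<And>x. \<sigma> x = 0 \<Longrightarrow> x = 0"
  shows "(\<exists>x. sev \<sigma> a x \<noteq> 0) \<Longrightarrow> card {x. sev \<sigma> a x = 0} \<le> card {x. \<sigma> x = x} ^ (length a - 1)"
proof (induction "length a" arbitrary: a rule: less_induct)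
  case (less a)
  have Kpos: "card {x. \<sigma> x = x} \<ge> 1"
  proof -
    have "\<sigma> 0 = 0" using sadd[of 0 0] by (metis add.right_neutral add_left_cancel)
    hence "0 \<in> {x. \<sigma> x = x}" by simp
    thus ?thesis by (metis One_nat_def Suc_leI card_gt_0_iff empty_iff finite)
  qed
  show ?case
  proof (cases "\<forall>x. sev \<sigma> a x = 0 \<longrightarrow> x = 0")
    case True
    hence "{x. sev \<sigma> a x = 0} \<subseteq> {0}" by auto
    hence "card {x. sev \<sigma> a x = 0} \<le> 1" by (metis card.empty card.insert card_mono finite.intros(1) finite_insert empty_iff One_nat_def)
    also have "1 \<le> card {x. \<sigma> x = x} ^ (length a - 1)" using Kpos by simp
    finally show ?thesis .
  next
    case False
    then obtain w where w0: "w \<noteq> 0" and wk: "sev \<sigma> a w = 0" by blast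
    define c where "c = \<sigma> w / w"
    obtain b r where lenb: "length b = length a - 1"
      and e: "\<And>x. sev \<sigma> a x = sev \<sigma> b (\<sigma> x - c * x) + r * x"
      using sev_div[OF sadd smul, of a c] by blast
    have Dw: "\<sigma> w - c * w = 0" unfolding c_def using w0 by simp
    have "r * w = 0" using e[of w] wk Dw sev_zero[OF sadd] by simp
    hence r0: "r = 0" using w0 by simp
    have e2: "sev \<sigma> a x = sev \<sigma> b (\<sigma> x - c * x)" for x using e r0 by simp
    have ane: "a \<noteq> []" using less.prems by auto
    have bnz: "\<exists>y. sev \<sigma> b y \<noteq> 0" using less.prems e2 by metis
    hence bne: "b \<noteq> []" by auto
    have IH: "card {y. sev \<sigma> b y = 0} \<le> card {x. \<sigma> x = x} ^ (length b - 1)"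
      using less.hyps[of b] lenb ane bnz by simp
    define D where "D x = \<sigma> x - c * x" for x
    have Dadd: "D (x + y) = D x + D y" for x y unfolding D_def using sadd by (simp add: algebra_simps)
    have ker: "{x. sev \<sigma> a x = 0} = D -` {y. sev \<sigma> b y = 0}" unfolding D_def using e2 by auto
    have kerD: "card {x. D x = 0} \<le> card {x. \<sigma> x = x}"
    proof -
      have sw: "\<sigma> w \<noteq> 0" using s0 w0 by blast
      have sinv: "\<sigma> (inverse z) = inverse (\<sigma> z)" if "z \<noteq> 0" for z
      proof -
        have "\<sigma> z * \<sigma> (inverse z) = 1" using smul[of z "inverse z"] that s1 by simp
        thus ?thesis by (metis inverse_unique)
      qed
      have "inj_on (\<lambda>x. x / w) {x. D x = 0}" using w0 by (auto intro: inj_onI)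
      moreover have "(\<lambda>x. x / w) ` {x. D x = 0} \<subseteq> {x. \<sigma> x = x}"
      proof
        fix z assume "z \<in> (\<lambda>x. x / w) ` {x. D x = 0}"
        then obtain x where x: "D x = 0" and z: "z = x / w" by blast
        have sx: "\<sigma> x = c * x" using x unfolding D_def by simp
        have "\<sigma> z = \<sigma> x * inverse (\<sigma> w)" unfolding z divide_inverse using smul sinv w0 by simp
        also have "\<dots> = z" unfolding sx c_def z using w0 sw by (simp add: field_simps)
        finally show "z \<in> {x. \<sigma> x = x}" by simp
      qed
      ultimately show ?thesis by (meson card_inj_on_le finite)
    qed
    have "card {x. sev \<sigma> a x = 0} \<le> card {x. D x = 0} * card {y. sev \<sigma> b y = 0}"
      unfolding ker by (rule fiber_card[OF Dadd])
    also have "\<dots> \<le> card {x. \<sigma> x = x} * card {x. \<sigma> x = x} ^ (length b - 1)"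
      using kerD IH by (simp add: mult_le_mono)
    also have "\<dots> = card {x. \<sigma> x = x} ^ (length a - 1)"
    proof -
      obtain m where m: "length b = Suc m" using bne by (cases "length b") auto
      hence "length a - 1 = Suc m" using lenb by simp
      thus ?thesis using m by simp
    qed
    finally show ?thesis .
  qed
qed


lemma pow_n_same:
  fixes x :: "'a::{field,finite}"
  assumes "card (UNIV :: 'a set) = 2 ^ n"
  shows "x ^ (2 ^ n) = x"
  using pow_card_same[of x] assms by simp

lemma pow_nv_same:
  fixes x :: "'a::{field,finite}"
  assumes "card (UNIV :: 'a set) = 2 ^ n"
  shows "x ^ (2 ^ (n * v)) = x"
  by (rule pow2_iter_fixed) (rule pow_n_same[OF assms])

lemma pow_mod_n:
  fixes x :: "'a::{field,finite}"
  assumes "card (UNIV :: 'a set) = 2 ^ n"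
  shows "x ^ (2 ^ a) = x ^ (2 ^ (a mod n))"
proof -
  have "a = a mod n + n * (a div n)" by simp
  hence "x ^ (2 ^ a) = (x ^ (2 ^ (a mod n))) ^ (2 ^ (n * (a div n)))"
    by (metis pow2_compose)
  also have "\<dots> = x ^ (2 ^ (a mod n))" by (rule pow_nv_same[OF assms])
  finally show ?thesis .
qed

lemma fixed_k_imp_d:
  fixes x :: "'a::{field,finite}"
  assumes card: "card (UNIV :: 'a set) = 2 ^ n" and k0: "k \<noteq> 0"
    and xk: "x ^ (2 ^ k) = x"
  shows "x ^ (2 ^ gcd n k) = x"
proof -
  obtain u v where uv: "k * u = n * v + gcd k n" using bezout_nat[OF k0, of n] by blast
  have "x = x ^ (2 ^ (k * u))" using pow2_iter_fixed[OF xk, of u] by simp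
  also have "\<dots> = (x ^ (2 ^ gcd k n)) ^ (2 ^ (n * v))" unfolding uv
    by (metis pow2_compose add.commute)
  also have "\<dots> = x ^ (2 ^ gcd n k)" using pow_nv_same[OF card] by (simp add: gcd.commute)
  finally show ?thesis by simp
qed

lemma T_add:
  fixes x y :: "'a::field"
  assumes two: "(2::'a) = 0"
  shows "rel_trace d n (x + y) = rel_trace d n x + rel_trace d n y"
  unfolding rel_trace_def by (simp add: frob_add[OF two] sum.distrib)

lemma T_zero: "rel_trace d n (0::'a::field) = 0"
  unfolding rel_trace_def by (simp add: power_0_left)

lemma T_pow:
  fixes z :: "'a::{field,finite}"
  assumes two: "(2::'a) = 0" and card: "card (UNIV :: 'a set) = 2 ^ n" and nds: "n = d * s"
    and dpos: "d > 0"
  shows "(rel_trace d n z) ^ (2 ^ d) = rel_trace d n z"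
proof -
  have sdef: "n div d = s" using nds dpos by simp
  define g where "g i = z ^ (2 ^ (d * i))" for i
  have "(rel_trace d n z) ^ (2 ^ d) = (\<Sum>i<s. g (Suc i))"
    unfolding rel_trace_def sdef g_def frob_sum[OF two]
    by (simp add: pow2_compose add.commute)
  also have "\<dots> = (\<Sum>i<s. g i)"
  proof -
    have "g s = g 0" unfolding g_def using pow_n_same[OF card, of z] nds by simp
    hence "(\<Sum>i<s. g (Suc i)) + g 0 = (\<Sum>i<s. g i) + g 0"
      using sum.lessThan_Suc_shift[of g s] sum.lessThan_Suc[of g s] by (simp add: add.commute)
    thus ?thesis by simp
  qed
  finally show ?thesis unfolding rel_trace_def sdef g_def .
qed

lemma T_frob:
  fixes z :: "'a::{field,finite}"
  assumes two: "(2::'a) = 0" and card: "card (UNIV :: 'a set) = 2 ^ n" and nds: "n = d * s"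
    and dpos: "d > 0"
  shows "rel_trace d n (z ^ (2 ^ (d * t))) = rel_trace d n z"
proof (induction t)
  case 0 then show ?case by simp
next
  case (Suc t)
  have "rel_trace d n (z ^ (2 ^ (d * Suc t))) = rel_trace d n ((z ^ (2 ^ (d * t))) ^ (2 ^ d))"
    by (metis pow2_compose mult_Suc_right add.commute)
  also have "\<dots> = (rel_trace d n (z ^ (2 ^ (d * t)))) ^ (2 ^ d)"
    unfolding rel_trace_def frob_sum[OF two] by (simp add: pow2_compose add_ac)
  also have "\<dots> = rel_trace d n z" using Suc T_pow[OF two card nds dpos] by simp
  finally show ?case .
qed

lemma T_scal:
  fixes z c :: "'a::field"
  assumes c: "c ^ (2 ^ d) = c"
  shows "rel_trace d n (c * z) = c * rel_trace d n z"
  unfolding rel_trace_def using pow2_iter_fixed[OF c]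
  by (simp add: power_mult_distrib sum_distrib_left)

lemma T_kernel:
  fixes z :: "'a::{field,finite}"
  assumes nds: "n = d * s" and dpos: "d > 0" and spos: "s > 0"
  shows "card {z::'a. rel_trace d n z = 0} \<le> 2 ^ (d * (s - 1))"
proof -
  have sdef: "n div d = s" using nds dpos by simp
  define p :: "'a poly" where "p = (\<Sum>i<s. Polynomial.monom 1 (2 ^ (d * i)))"
  have ev: "poly p z = rel_trace d n z" for z
    unfolding p_def rel_trace_def sdef by (simp add: poly_sum poly_monom)
  have "Polynomial.coeff p 1 = (\<Sum>i<s. if i = 0 then 1 else 0)"
    unfolding p_def coeff_sum coeff_monom using dpos
    by (intro sum.cong refl) (simp add: power_eq_1_iff)
  also have "\<dots> = 1" using spos by simp
  finally have pnz: "p \<noteq> 0" by auto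
  have "degree p \<le> 2 ^ (d * (s - 1))" unfolding p_def
  proof (rule degree_sum_le)
    fix i assume "i \<in> {..<s}"
    hence "d * i \<le> d * (s - 1)" by (intro mult_le_mono2) auto
    hence "(2::nat) ^ (d * i) \<le> 2 ^ (d * (s - 1))" by (rule power_increasing) simp
    thus "degree (Polynomial.monom (1::'a) (2 ^ (d * i))) \<le> 2 ^ (d * (s - 1))"
      using degree_monom_le order_trans by blast
  qed simp
  moreover have "card {z. poly p z = 0} \<le> degree p" by (rule card_poly_roots_bound[OF pnz])
  ultimately show ?thesis using ev by simp
qed

lemma card_K:
  assumes two: "(2::'a::{field,finite}) = 0" and card: "card (UNIV :: 'a set) = 2 ^ n"
    and nds: "n = d * s" and dpos: "d > 0" and spos: "s > 0"
  shows "card {x::'a. x ^ (2 ^ d) = x} = 2 ^ d"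
proof (rule antisym)
  define p :: "'a poly" where "p = Polynomial.monom 1 (2 ^ d) - Polynomial.monom 1 1"
  have ev: "poly p x = x ^ (2 ^ d) - x" for x unfolding p_def by (simp add: poly_monom)
  have "(1::nat) < 2 ^ d" using dpos one_less_power[of "2::nat" d] by simp
  hence "Polynomial.coeff p (2 ^ d) = 1" unfolding p_def by simp
  hence pnz: "p \<noteq> 0" by auto
  have "degree p \<le> 2 ^ d" unfolding p_def
    by (rule degree_diff_le) (auto intro: order_trans[OF degree_monom_le])
  moreover have "card {z. poly p z = 0} \<le> degree p" by (rule card_poly_roots_bound[OF pnz])
  ultimately show "card {x::'a. x ^ (2 ^ d) = x} \<le> 2 ^ d" using ev by simp
next
  have "rel_trace d n -` {x::'a. x ^ (2 ^ d) = x} = UNIV"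
    using T_pow[OF two card nds dpos] by auto
  hence "2 ^ n \<le> card {z::'a. rel_trace d n z = 0} * card {x::'a. x ^ (2 ^ d) = x}"
    using fiber_card[of "rel_trace d n" "{x::'a. x ^ (2 ^ d) = x}"] T_add[OF two] card by simp
  also have "\<dots> \<le> 2 ^ (d * (s - 1)) * card {x::'a. x ^ (2 ^ d) = x}"
    by (rule mult_le_mono1) (rule T_kernel[OF nds dpos spos])
  finally have "2 ^ (d * (s - 1)) * 2 ^ d \<le> 2 ^ (d * (s - 1)) * card {x::'a. x ^ (2 ^ d) = x}"
    using nds spos by (metis Suc_diff_1 mult_Suc_right power_add add.commute)
  thus "2 ^ d \<le> card {x::'a. x ^ (2 ^ d) = x}" by simp
qed


definition Bf :: "nat \<Rightarrow> nat \<Rightarrow> nat \<Rightarrow> 'a::field \<Rightarrow> 'a \<Rightarrow> 'a \<Rightarrow> 'a \<Rightarrow> 'a" where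
  "Bf d n k \<alpha> \<beta> x y = rel_trace d n (\<alpha> * (x ^ (2 ^ (2 * k)) * y + x * y ^ (2 ^ (2 * k)))
      + \<beta> * (x ^ (2 ^ k) * y + x * y ^ (2 ^ k)))"

lemma bil_formula:
  fixes \<alpha> \<beta> x y :: "'a::field"
  assumes two: "(2::'a) = 0"
  shows "assoc_bilinear (f_ab d n k \<alpha> \<beta>) x y = Bf d n k \<alpha> \<beta> x y"
proof -
  define Q where "Q = (2::nat) ^ k"
  define Q2 where "Q2 = (2::nat) ^ (2 * k)"
  have p1: "(x + y) ^ (Q + 1) = x ^ (Q + 1) + y ^ (Q + 1) + (x ^ Q * y + x * y ^ Q)"
    unfolding Q_def using frob_add[OF two, of x y k] by (simp add: algebra_simps)
  have p2: "(x + y) ^ (Q2 + 1) = x ^ (Q2 + 1) + y ^ (Q2 + 1) + (x ^ Q2 * y + x * y ^ Q2)"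
    unfolding Q2_def using frob_add[OF two, of x y "2*k"] by (simp add: algebra_simps)
  have "\<alpha> * (x + y) ^ (Q2 + 1) + \<beta> * (x + y) ^ (Q + 1) =
     (\<alpha> * x ^ (Q2 + 1) + \<beta> * x ^ (Q + 1)) + (\<alpha> * y ^ (Q2 + 1) + \<beta> * y ^ (Q + 1))
     + (\<alpha> * (x ^ Q2 * y + x * y ^ Q2) + \<beta> * (x ^ Q * y + x * y ^ Q))"
    unfolding p1 p2 by (simp add: algebra_simps)
  then show ?thesis
    unfolding assoc_bilinear_def f_ab_def Bf_def Q_def[symmetric] Q2_def[symmetric]
    by (simp add: T_add[OF two])
qed

lemma Bf_add:
  fixes \<alpha> \<beta> x x' y :: "'a::field"
  assumes two: "(2::'a) = 0"
  shows "Bf d n k \<alpha> \<beta> (x + x') y = Bf d n k \<alpha> \<beta> x y + Bf d n k \<alpha> \<beta> x' y"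
  unfolding Bf_def T_add[OF two, symmetric] frob_add[OF two]
  by (rule arg_cong[where f="rel_trace d n"]) (simp add: algebra_simps)

lemma Bf_sym:
  fixes \<alpha> \<beta> x y :: "'a::field"
  shows "Bf d n k \<alpha> \<beta> x y = Bf d n k \<alpha> \<beta> y x"
  unfolding Bf_def by (rule arg_cong[where f="rel_trace d n"]) (simp add: algebra_simps)

lemma Bf_alt:
  fixes \<alpha> \<beta> x :: "'a::field"
  assumes two: "(2::'a) = 0"
  shows "Bf d n k \<alpha> \<beta> x x = 0"
proof -
  have pp: "u + u = 0" for u :: 'a using two by (metis mult_2 mult_zero_left)
  show ?thesis unfolding Bf_def
    by (simp add: pp mult.commute[of x] T_zero)
qed

lemma Bf_scal:
  fixes \<alpha> \<beta> x y a :: "'a::field"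
  assumes a: "a ^ (2 ^ d) = a" and k: "k = d * t"
  shows "Bf d n k \<alpha> \<beta> (a * x) y = a * Bf d n k \<alpha> \<beta> x y"
proof -
  have a1: "a ^ (2 ^ k) = a" unfolding k by (rule pow2_iter_fixed[OF a])
  have a2: "a ^ (2 ^ (2 * k)) = a" using pow2_iter_fixed[OF a, of "2 * t"] k by (simp add: mult_ac)
  show ?thesis unfolding Bf_def
    using a2 by (simp add: power_mult_distrib a1 a2 mult.commute[of 2 k] T_scal[OF a, symmetric] algebra_simps)
qed


definition L1 :: "nat \<Rightarrow> 'a::field \<Rightarrow> 'a \<Rightarrow> 'a \<Rightarrow> 'a" where
  "L1 k \<alpha> \<beta> = sev (\<lambda>x. x ^ (2 ^ k)) [\<alpha>, \<beta> ^ (2 ^ k), 0, \<beta> ^ (2 ^ (2 * k)), \<alpha> ^ (2 ^ (2 * k))]"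

lemma L1_eq:
  fixes x :: "'a::field"
  shows "L1 k \<alpha> \<beta> x = \<alpha> * x ^ (2 ^ (k * 0)) + \<beta> ^ (2 ^ k) * x ^ (2 ^ (k * 1))
     + \<beta> ^ (2 ^ (2 * k)) * x ^ (2 ^ (k * 3)) + \<alpha> ^ (2 ^ (2 * k)) * x ^ (2 ^ (k * 4))"
proof -
  have e3: "((x ^ (2 ^ k)) ^ (2 ^ k)) ^ (2 ^ k) = x ^ (2 ^ (k * 3))"
    unfolding pow2_compose by (rule arg_cong[where f="\<lambda>m. x ^ (2 ^ m)"]) simp
  have e4: "(((x ^ (2 ^ k)) ^ (2 ^ k)) ^ (2 ^ k)) ^ (2 ^ k) = x ^ (2 ^ (k * 4))"
    unfolding pow2_compose by (rule arg_cong[where f="\<lambda>m. x ^ (2 ^ m)"]) simp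
  show ?thesis unfolding L1_def using e3 e4 by simp
qed

lemma Bf_L1:
  fixes \<alpha> \<beta> x y :: "'a::{field,finite}"
  assumes two: "(2::'a) = 0" and card: "card (UNIV :: 'a set) = 2 ^ n" and nds: "n = d * s"
    and dpos: "d > 0" and k: "k = d * t"
  shows "Bf d n k \<alpha> \<beta> x y = rel_trace d n (y ^ (2 ^ (2 * k)) * L1 k \<alpha> \<beta> x)"
proof -
  note Tf = T_frob[OF two card nds dpos]
  note Ta = T_add[OF two]
  have k4: "k * 4 = k + (k + (k + k))" and k3: "k * 3 = k + (k + k)" by simp_all
  have f2: "rel_trace d n (z::'a) = rel_trace d n (z ^ (2 ^ (2 * k)))" for z
    using Tf[of z "2 * t"] k by (simp add: mult_ac)
  have f1: "rel_trace d n (z::'a) = rel_trace d n (z ^ (2 ^ k))" for z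
    using Tf[of z t] k by simp
  have "Bf d n k \<alpha> \<beta> x y = rel_trace d n (\<alpha> * x ^ (2 ^ (2 * k)) * y) + rel_trace d n (\<alpha> * x * y ^ (2 ^ (2 * k)))
     + rel_trace d n (\<beta> * x ^ (2 ^ k) * y) + rel_trace d n (\<beta> * x * y ^ (2 ^ k))"
    unfolding Bf_def Ta[symmetric] by (simp add: algebra_simps)
  also have "rel_trace d n (\<alpha> * x ^ (2 ^ (2 * k)) * y) = rel_trace d n (\<alpha> ^ (2 ^ (2 * k)) * x ^ (2 ^ (k * 4)) * y ^ (2 ^ (2 * k)))"
    by (subst f2) (simp add: power_mult_distrib pow2_compose algebra_simps mult_2 mult_2_right k3 k4)
  also have "rel_trace d n (\<beta> * x ^ (2 ^ k) * y) = rel_trace d n (\<beta> ^ (2 ^ (2 * k)) * x ^ (2 ^ (k * 3)) * y ^ (2 ^ (2 * k)))"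
    by (subst f2) (simp add: power_mult_distrib pow2_compose algebra_simps mult_2 mult_2_right k3 k4 numeral_3_eq_3)
  also have "rel_trace d n (\<beta> * x * y ^ (2 ^ k)) = rel_trace d n (\<beta> ^ (2 ^ k) * x ^ (2 ^ (k * 1)) * y ^ (2 ^ (2 * k)))"
    by (subst f1) (simp add: power_mult_distrib pow2_compose algebra_simps mult_2 mult_2_right k3 k4)
  finally show ?thesis unfolding L1_eq Ta[symmetric]
    by (simp add: algebra_simps mult_2 mult_2_right k3 k4)
qed


lemma rad_sub:
  fixes \<alpha> \<beta> x :: "'a::{field,finite}"
  assumes two: "(2::'a) = 0" and card: "card (UNIV :: 'a set) = 2 ^ n" and nds: "n = d * s"
    and dpos: "d > 0" and spos: "s > 0" and k: "k = d * t"
    and xr: "\<forall>y. Bf d n k \<alpha> \<beta> x y = 0"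
  shows "L1 k \<alpha> \<beta> x = 0"
proof (rule ccontr)
  assume ne: "L1 k \<alpha> \<beta> x \<noteq> 0"
  have "card {z::'a. rel_trace d n z = 0} < card (UNIV :: 'a set)"
  proof -
    have "card {z::'a. rel_trace d n z = 0} \<le> 2 ^ (d * (s - 1))" by (rule T_kernel[OF nds dpos spos])
    also have "\<dots> < 2 ^ n" using nds dpos spos by (intro power_strict_increasing) auto
    finally show ?thesis using card by simp
  qed
  then obtain z0 :: 'a where z0: "rel_trace d n z0 \<noteq> 0"
    by (metis (mono_tags, lifting) UNIV_I antisym card_mono finite mem_Collect_eq nat_less_le subsetI)
  have "inj (\<lambda>y::'a. y ^ (2 ^ (2 * k)))"
  proof (rule injI)
    fix a b :: 'a assume "a ^ (2 ^ (2 * k)) = b ^ (2 ^ (2 * k))"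
    hence "(a - b) ^ (2 ^ (2 * k)) = 0"
      using minus_eq_plus_c2[OF two] frob_add[OF two] by (metis minus_eq_plus_c2[OF two] right_minus_eq)
    thus "a = b" by simp
  qed
  hence "surj (\<lambda>y::'a. y ^ (2 ^ (2 * k)))" by (rule finite_UNIV_inj_surj[rotated]) simp
  then obtain y where y: "y ^ (2 ^ (2 * k)) = z0 / L1 k \<alpha> \<beta> x" by (metis surjD)
  have "Bf d n k \<alpha> \<beta> x y = rel_trace d n z0"
    unfolding Bf_L1[OF two card nds dpos k] y using ne by simp
  thus False using xr z0 by simp
qed

lemma mod_distinct:
  fixes n k d s t i j :: nat
  assumes nds: "n = d * s" and k: "k = d * t" and dpos: "d > 0" and cop: "coprime s t"
    and s5: "s \<ge> 5" and ij: "i < j" "j \<le> 4"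
  shows "(k * i) mod n \<noteq> (k * j) mod n"
proof
  assume eq: "(k * i) mod n = (k * j) mod n"
  have "k * i \<le> k * j" using ij by simp
  hence "n dvd k * j - k * i" using eq mod_eq_dvd_iff_nat by metis
  hence "d * s dvd d * (t * (j - i))" unfolding nds k by (simp add: diff_mult_distrib2 mult_ac)
  hence "s dvd t * (j - i)" using dpos by simp
  hence "s dvd j - i" using cop by (simp add: coprime_dvd_mult_right_iff)
  moreover have "j - i > 0" using ij by simp
  ultimately have "s \<le> j - i" by (simp add: dvd_imp_le)
  thus False using ij s5 by simp
qed

lemma L1_nonzero:
  fixes \<alpha> \<beta> :: "'a::{field,finite}"
  assumes card: "card (UNIV :: 'a set) = 2 ^ n" and npos: "n > 0"
    and nds: "n = d * s" and k: "k = d * t" and dpos: "d > 0" and cop: "coprime s t"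
    and s5: "s \<ge> 5" and ab: "(\<alpha>, \<beta>) \<noteq> (0, 0)"
  shows "\<exists>x. L1 k \<alpha> \<beta> x \<noteq> 0"
proof -
  define e where "e j = (k * j) mod n" for j
  have dist: "i < j \<Longrightarrow> j \<le> 4 \<Longrightarrow> e i \<noteq> e j" for i j
    unfolding e_def using mod_distinct[OF nds k dpos cop s5] by blast
  have dist2: "i < j \<Longrightarrow> j \<le> 4 \<Longrightarrow> (2::nat) ^ e i \<noteq> 2 ^ e j" for i j
    using dist by simp
  have elt: "e j < n" for j unfolding e_def using npos by simp
  define p :: "'a poly" where "p = Polynomial.monom \<alpha> (2 ^ e 0) + Polynomial.monom (\<beta> ^ (2 ^ k)) (2 ^ e 1)
     + Polynomial.monom (\<beta> ^ (2 ^ (2 * k))) (2 ^ e 3) + Polynomial.monom (\<alpha> ^ (2 ^ (2 * k))) (2 ^ e 4)"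
  have ev: "poly p x = L1 k \<alpha> \<beta> x" for x
    unfolding p_def L1_eq e_def using pow_mod_n[OF card] by (simp add: poly_monom)
  have dg: "degree p \<le> 2 ^ (n - 1)"
  proof -
    have b: "degree (Polynomial.monom c (2 ^ e j)) \<le> 2 ^ (n - 1)" for c :: 'a and j
    proof -
      have "e j \<le> n - 1" using elt[of j] by simp
      hence "(2::nat) ^ e j \<le> 2 ^ (n - 1)" by (rule power_increasing) simp
      thus ?thesis using degree_monom_le order_trans by blast
    qed
    show ?thesis unfolding p_def
      by (intro degree_add_le b)
  qed
  have pnz: "p \<noteq> 0"
  proof (cases "\<alpha> = 0")
    case False
    have "Polynomial.coeff p (2 ^ e 0) = \<alpha>"
      unfolding p_def using dist2[of 0 1] dist2[of 0 3] dist2[of 0 4] by simp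
    thus ?thesis using False by auto
  next
    case True
    hence b0: "\<beta> \<noteq> 0" using ab by simp
    have "Polynomial.coeff p (2 ^ e 1) = \<beta> ^ (2 ^ k)"
      unfolding p_def using True dist2[of 1 3] by simp
    thus ?thesis using b0 by auto
  qed
  have "card {x. poly p x = 0} \<le> degree p" by (rule card_poly_roots_bound[OF pnz])
  also have "\<dots> < 2 ^ n" using dg npos by (meson le_less_trans diff_less power_strict_increasing_iff one_less_numeral_iff semiring_norm(76) zero_less_one)
  finally have "{x. poly p x = 0} \<noteq> (UNIV :: 'a set)" using card by auto
  thus ?thesis using ev by auto
qed

theorem lemma3:
  fixes \<alpha> \<beta> :: "'a::{field, finite}"
    and n k :: nat
  assumes "n > 0"
    and "card (UNIV :: 'a set) = 2 ^ n"
    and "1 \<le> k" and "k \<le> n - 1"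
    and "3 * k \<noteq> n" and "3 * k \<noteq> 2 * n"
    and "odd (n div gcd n k)"
    and "(\<alpha>, \<beta>) \<noteq> (0, 0)"
  shows "form_rank (2 ^ gcd n k) (n div gcd n k)
           (assoc_bilinear (f_ab (gcd n k) n k \<alpha> \<beta>))
         \<in> {n div gcd n k - 1, n div gcd n k - 3}"
proof -
  note npos = assms(1) and card = assms(2) and k1 = assms(3) and sodd = assms(7) and ab = assms(8)
  define d where "d = gcd n k"
  define s where "s = n div d"
  obtain t where k: "k = d * t" unfolding d_def by (metis gcd_dvd2 dvdE)
  have dpos: "d > 0" unfolding d_def using npos by simp
  have nds: "n = d * s" unfolding s_def d_def by simp
  have spos: "s > 0" using nds npos by (cases s) auto
  have cop: "coprime s t"
  proof -
    have "coprime (n div gcd n k) (k div gcd n k)" using div_gcd_coprime npos by blast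
    moreover have "k div gcd n k = t" using k dpos unfolding d_def by (metis nonzero_mult_div_cancel_left less_irrefl)
    ultimately show ?thesis unfolding s_def d_def by simp
  qed
  have k0: "k \<noteq> 0" using k1 by simp
  have two: "(2::'a) = 0" by (rule char2_of_card[OF card npos])
  define K where "K = {x::'a. x ^ (2 ^ d) = x}"
  have cK: "card K = 2 ^ d" unfolding K_def by (rule card_K[OF two card nds dpos spos])
  define B where "B = Bf d n k \<alpha> \<beta>"
  have radeq: "radical (assoc_bilinear (f_ab d n k \<alpha> \<beta>)) = {v\<in>UNIV. \<forall>u\<in>UNIV. B v u = 0}"
    unfolding radical_def B_def bil_formula[OF two] by simp
  obtain j where j: "card (UNIV :: 'a set) = card {v\<in>UNIV. \<forall>u\<in>UNIV. B v u = 0} * card K ^ (2 * j)"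
  proof -
    have "\<exists>j. card (UNIV :: 'a set) = card {v\<in>UNIV. \<forall>u\<in>UNIV. B v u = 0} * card K ^ (2 * j)"
    proof (rule sympl[where B = B and K = K])
      show "(2::'a) = 0" by (rule two)
      show "a * b \<in> K" if "a \<in> K" "b \<in> K" for a b using that unfolding K_def by (simp add: power_mult_distrib)
      show "inverse a \<in> K" if "a \<in> K" for a using that unfolding K_def by (simp add: power_inverse)
      show "B x y \<in> K" for x y unfolding K_def B_def Bf_def using T_pow[OF two card nds dpos] by simp
      show "B (x + y) z = B x z + B y z" for x y z unfolding B_def by (rule Bf_add[OF two])
      show "B x y = B y x" for x y unfolding B_def by (rule Bf_sym)
      show "B (a * x) y = a * B x y" if "a \<in> K" for a x y
        unfolding B_def using that unfolding K_def by (intro Bf_scal[OF _ k]) simp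
      show "B x x = 0" for x unfolding B_def by (rule Bf_alt[OF two])
    qed auto
    thus ?thesis using that by blast
  qed
  define R where "R = radical (assoc_bilinear (f_ab d n k \<alpha> \<beta>))"
  have jR: "2 ^ (d * s) = card R * (2 ^ d) ^ (2 * j)" using j card nds cK radeq unfolding R_def by simp
  have "0 \<in> R" unfolding R_def radeq B_def by (simp add: Bf_def T_zero power_0_left)
  hence Rpos: "card R \<ge> 1" by (metis One_nat_def Suc_leI card_gt_0_iff empty_iff finite)
  have js: "2 * j \<le> s"
  proof (rule ccontr)
    assume "\<not> 2 * j \<le> s"
    hence "d * s < d * (2 * j)" using dpos by simp
    hence "(2::nat) ^ (d * s) < 2 ^ (d * (2 * j))" by (rule power_strict_increasing) simp
    also have "\<dots> \<le> card R * (2 ^ d) ^ (2 * j)" using Rpos by (simp add: power_mult)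
    finally show False using jR by simp
  qed
  define m where "m = s - 2 * j"
  have cR: "card R = (2 ^ d) ^ m"
  proof -
    have "(2::nat) ^ (d * s) = (2 ^ d) ^ m * (2 ^ d) ^ (2 * j)"
      unfolding m_def using js by (simp add: power_mult[symmetric] power_add[symmetric] add_mult_distrib2[symmetric])
    thus ?thesis using jR by simp
  qed
  have d2: "(1::nat) < 2 ^ d" using dpos one_less_power[of "2::nat" d] by simp
  have theR: "(THE m'. card R = (2 ^ d) ^ m') = m"
    using cR by (rule the_equality) (use d2 power_inject_exp in \<open>metis cR\<close>)
  have rank: "form_rank (2 ^ d) s (assoc_bilinear (f_ab d n k \<alpha> \<beta>)) = 2 * j"
    unfolding form_rank_def R_def[symmetric] theR m_def using js by simp
  have modd: "odd m" unfolding m_def using sodd js unfolding s_def d_def by auto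
  have m3: "m \<le> 3"
  proof (cases "s \<ge> 5")
    case False
    hence "m \<le> 4" unfolding m_def by simp
    thus ?thesis using modd by presburger
  next
    case True
    define \<sigma> where "\<sigma> x = x ^ (2 ^ k)" for x :: 'a
    have Rsub: "R \<subseteq> {x. L1 k \<alpha> \<beta> x = 0}"
      unfolding R_def radeq B_def using rad_sub[OF two card nds dpos spos k] by auto
    have nz: "\<exists>x. sev \<sigma> [\<alpha>, \<beta> ^ (2 ^ k), 0, \<beta> ^ (2 ^ (2 * k)), \<alpha> ^ (2 ^ (2 * k))] x \<noteq> 0"
      using L1_nonzero[OF card npos nds k dpos cop True ab] unfolding L1_def \<sigma>_def[abs_def] .
    have "card {x. sev \<sigma> [\<alpha>, \<beta> ^ (2 ^ k), 0, \<beta> ^ (2 ^ (2 * k)), \<alpha> ^ (2 ^ (2 * k))] x = 0}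
        \<le> card {x. \<sigma> x = x} ^ (length [\<alpha>, \<beta> ^ (2 ^ k), 0, \<beta> ^ (2 ^ (2 * k)), \<alpha> ^ (2 ^ (2 * k))] - 1)"
    proof (rule sev_kernel[OF _ _ _ _ nz])
      show "\<sigma> (x + y) = \<sigma> x + \<sigma> y" for x y unfolding \<sigma>_def by (rule frob_add[OF two])
      show "\<sigma> (x * y) = \<sigma> x * \<sigma> y" for x y unfolding \<sigma>_def by (rule power_mult_distrib)
      show "\<sigma> 1 = 1" unfolding \<sigma>_def by simp
      show "x = 0" if "\<sigma> x = 0" for x using that unfolding \<sigma>_def by simp
    qed
    moreover have len: "length [\<alpha>, \<beta> ^ (2 ^ k), 0, \<beta> ^ (2 ^ (2 * k)), \<alpha> ^ (2 ^ (2 * k))] - 1 = 4" by simp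
    moreover have L1s: "L1 k \<alpha> \<beta> = sev \<sigma> [\<alpha>, \<beta> ^ (2 ^ k), 0, \<beta> ^ (2 ^ (2 * k)), \<alpha> ^ (2 ^ (2 * k))]"
      unfolding L1_def \<sigma>_def[abs_def] by simp
    ultimately have "card {x. L1 k \<alpha> \<beta> x = 0} \<le> card {x. \<sigma> x = x} ^ 4"
      by metis
    also have "card {x. \<sigma> x = x} \<le> card K"
      unfolding \<sigma>_def K_def d_def by (intro card_mono) (auto intro: fixed_k_imp_d[OF card k0])
    hence "card {x. \<sigma> x = x} ^ 4 \<le> card K ^ 4" by (rule power_mono) simp
    finally have "card {x. L1 k \<alpha> \<beta> x = 0} \<le> (2 ^ d) ^ 4" using cK by simp
    moreover have "card R \<le> card {x. L1 k \<alpha> \<beta> x = 0}" using Rsub by (intro card_mono) auto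
    ultimately have "((2::nat) ^ d) ^ m \<le> (2 ^ d) ^ 4" using cR by simp
    hence "m \<le> 4" using d2 by (simp add: power_increasing_iff)
    thus ?thesis using modd by presburger
  qed
  have "2 * j = s - 1 \<or> 2 * j = s - 3"
    using m3 modd js unfolding m_def by presburger
  thus ?thesis using rank unfolding d_def s_def by auto
qed

end
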